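(* Fix $\epsilon\in(0,1)$. For a permutation of $[n]$ ($n$ even) chosen uniformly among those with all cycle lengths even, and even $k$, the expected number $\mathbb{E}_e^{(n)}Y_k$ of elements in $k$-cycles satisfies, uniformly, \[ \mathbb{E}_e^{(n)}Y_k\to\left(1-\frac kn\right)^{-1/2} \] as $k,n\to\infty$ with $0<k/n<1-\epsilon$; that is, $\mathbb{E}_e^{(n)}Y_k=\left(1-\frac kn\right)^{-1/2}(1+O(n^{-1}))$ with the implied constant uniform over such $k,n$.
   Context: $\mathbb{E}_e^{(n)}$ denotes expectation under the uniform measure on permutations of $[n]$ with all cycle lengths even. $Y_k=kX_k$, where $X_k$ is the number of $k$-cycles. *)

theory Defs
  imports Complex_Main "HOL-Combinatorics.Permutations" "HOL-Combinatorics.Orbits"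
begin

definition even_cycle_perms :: "nat \<Rightarrow> (nat \<Rightarrow> nat) set" where
  "even_cycle_perms n =
     {p. p permutes {1..n} \<and> (\<forall>x\<in>{1..n}. even (card (orbit p x)))}"

definition num_cycles :: "nat \<Rightarrow> nat \<Rightarrow> (nat \<Rightarrow> nat) \<Rightarrow> nat" where
  "num_cycles n k p = card {orbit p x | x. x \<in> {1..n} \<and> card (orbit p x) = k}"

definition Y :: "nat \<Rightarrow> nat \<Rightarrow> (nat \<Rightarrow> nat) \<Rightarrow> nat" where
  "Y n k p = k * num_cycles n k p"

definition E_even :: "nat \<Rightarrow> ((nat \<Rightarrow> nat) \<Rightarrow> real) \<Rightarrow> real" where
  "E_even n f = (\<Sum>p\<in>even_cycle_perms n. f p) / real (card (even_cycle_perms n))"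

end

theory Submission
  imports Defs "HOL-Combinatorics.Cycles"
begin

definition D :: "nat \<Rightarrow> nat" where "D m = (\<Prod>i<m. 2*i+1)"
definition e :: "nat \<Rightarrow> nat" where "e n = (if odd n then 0 else (D (n div 2))^2)"

definition G :: "nat \<Rightarrow> nat" where
  "G m = (\<Sum>j\<in>{1..m}. \<Prod>{2*m-2*j+1..2*m-1} * (D (m-j))^2)"

lemma D_Suc: "D (Suc m) = (2*m+1) * D m"
  by (simp add: D_def)

lemma G_Suc: "G (Suc m) = (2*m+1) * (D m)^2 + 2*m*(2*m+1) * G m"
proof -
  have "G (Suc m) = (\<Sum>j\<in>insert 1 {2..Suc m}. \<Prod>{2*Suc m-2*j+1..2*Suc m-1} * (D (Suc m-j))^2)"
    unfolding G_def by (rule sum.cong) auto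
  also have "\<dots> = (2*m+1) * (D m)^2 + (\<Sum>j\<in>{2..Suc m}. \<Prod>{2*Suc m-2*j+1..2*Suc m-1} * (D (Suc m-j))^2)"
    by simp
  also have "(\<Sum>j\<in>{2..Suc m}. \<Prod>{2*Suc m-2*j+1..2*Suc m-1} * (D (Suc m-j))^2)
      = (\<Sum>i\<in>{1..m}. \<Prod>{2*Suc m-2*Suc i+1..2*Suc m-1} * (D (Suc m-Suc i))^2)"
    by (rule sum.reindex_bij_witness[where j="\<lambda>j. j - 1" and i=Suc]) (auto simp: Suc_diff_Suc)
  also have "\<dots> = (\<Sum>i\<in>{1..m}. 2*m*(2*m+1) * (\<Prod>{2*m-2*i+1..2*m-1} * (D (m-i))^2))"
  proof (rule sum.cong)
    fix i assume i: "i \<in> {1..m}"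
    have "\<Prod>{2*Suc m-2*Suc i+1..2*Suc m-1} = \<Prod>{2*m-2*i+1..Suc (2*m)}" by simp
    also have "\<dots> = \<Prod>{2*m-2*i+1..2*m} * Suc (2*m)"
      by (subst prod.cl_ivl_Suc) auto
    also have "\<Prod>{2*m-2*i+1..2*m} = \<Prod>{2*m-2*i+1..Suc (2*m - 1)}" using i by simp
    also have "\<dots> = \<Prod>{2*m-2*i+1..2*m-1} * (2*m)"
      using i by (subst prod.cl_ivl_Suc) auto
    finally have P: "\<Prod>{2*Suc m-2*Suc i+1..2*Suc m-1} = \<Prod>{2*m-2*i+1..2*m-1} * (2*m) * Suc (2*m)" .
    show "\<Prod>{2*Suc m-2*Suc i+1..2*Suc m-1} * (D (Suc m-Suc i))^2
        = 2*m*(2*m+1) * (\<Prod>{2*m-2*i+1..2*m-1} * (D (m-i))^2)" unfolding P by (simp add: algebra_simps)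
  qed simp
  also have "\<dots> = 2*m*(2*m+1) * G m" unfolding G_def by (simp add: sum_distrib_left)
  finally show ?thesis .
qed

lemma G_closed: "G (Suc m) = (D (Suc m))^2"
proof (induction m)
  case 0 show ?case by (simp add: G_def D_def)
next
  case (Suc m)
  have "G (Suc (Suc m)) = (2*Suc m+1) * (D (Suc m))^2 + 2*Suc m*(2*Suc m+1) * (D (Suc m))^2"
    using G_Suc[of "Suc m"] Suc by simp
  also have "\<dots> = (D (Suc (Suc m)))^2" unfolding D_Suc[of "Suc m"] by (simp add: algebra_simps power2_eq_square)
  finally show ?case .
qed

lemma e_rec:
  assumes "n \<ge> 1"
  shows "(\<Sum>k\<in>{1..n}. if even k then \<Prod>{n-k+1..n-1} * e (n-k) else 0) = e n"
proof (cases "even n")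
  case False
  then show ?thesis by (auto simp: e_def intro!: sum.neutral)
next
  case True
  then obtain m where m: "n = 2*Suc m" using assms by (metis evenE gr0_conv_Suc not_one_le_zero mult_0_right neq0_conv)
  have h: "\<And>x::nat. (Suc (Suc (2*m)) - 2*x) div 2 = Suc m - x" by presburger
  have "(\<Sum>k\<in>{1..n}. if even k then \<Prod>{n-k+1..n-1} * e (n-k) else 0)
      = (\<Sum>k\<in>{k\<in>{1..n}. even k}. \<Prod>{n-k+1..n-1} * e (n-k))"
    by (rule sum.inter_filter[symmetric]) simp
  also have "\<dots> = (\<Sum>j\<in>{1..Suc m}. \<Prod>{n-2*j+1..n-1} * e (n-2*j))"
    by (rule sum.reindex_bij_witness[where j="\<lambda>k. k div 2" and i="\<lambda>j. 2*j"]) (auto simp: m)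
  also have "\<dots> = G (Suc m)" unfolding G_def m
    by (rule sum.cong) (auto simp: e_def h)
  also have "\<dots> = e n" by (simp add: G_closed e_def m)
  finally show ?thesis .
qed

definition ECP :: "'a set \<Rightarrow> ('a \<Rightarrow> 'a) set" where
  "ECP A = {p. p permutes A \<and> (\<forall>x\<in>A. even (card (orbit p x)))}"

definition Sxk :: "'a set \<Rightarrow> 'a \<Rightarrow> nat \<Rightarrow> ('a \<Rightarrow> 'a) set" where
  "Sxk A x k = {p \<in> ECP A. card (orbit p x) = k}"

lemma self_orb: "p permutes A \<Longrightarrow> finite A \<Longrightarrow> x \<in> orbit p x"
  by (meson permutation_permutes permutation_self_in_orbit)

lemma orb_eq: "p permutes A \<Longrightarrow> finite A \<Longrightarrow> y \<in> orbit p x \<Longrightarrow> orbit p y = orbit p x"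
  by (meson cyclic_on_orbit orbit_cyclic_eq3)

lemma cycle_pow:
  assumes "distinct (x#xs)"
  shows "(cycle_of_list (x#xs) ^^ n) x = (x#xs) ! (n mod length (x#xs))"
proof -
  have "map (cycle_of_list (x#xs) ^^ n) (x#xs) ! 0 = rotate n (x#xs) ! 0"
    using cyclic_rotation[OF assms, of n] by simp
  then show ?thesis by (simp add: nth_rotate)
qed

lemma cycle_orbit:
  assumes "distinct (x#xs)"
  shows "orbit (cycle_of_list (x#xs)) x = set (x#xs)"
proof
  show "orbit (cycle_of_list (x#xs)) x \<subseteq> set (x#xs)"
    unfolding orbit_altdef using cycle_pow[OF assms]
    by (auto simp del: length_Cons list.set simp add: nth_mem)
  show "set (x#xs) \<subseteq> orbit (cycle_of_list (x#xs)) x"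
  proof
    fix y assume "y \<in> set (x#xs)"
    then obtain i where i: "i < length (x#xs)" "y = (x#xs) ! i" by (metis in_set_conv_nth)
    have "(cycle_of_list (x#xs) ^^ (i + length (x#xs))) x = y"
    proof -
      have m: "(i + length (x#xs)) mod length (x#xs) = i" using i(1) by (metis mod_add_self2 mod_less)
      show ?thesis using cycle_pow[OF assms, of "i + length (x#xs)"] m i(2) by metis
    qed
    then show "y \<in> orbit (cycle_of_list (x#xs)) x" unfolding orbit_altdef
      by (metis (mono_tags, lifting) add_gr_0 length_greater_0_conv list.distinct(1) mem_Collect_eq)
  qed
qed

lemma finite_ECP: "finite B \<Longrightarrow> finite (ECP B)"
  by (rule finite_subset[OF _ finite_permutations]) (auto simp: ECP_def)

lemma card_Sxk:
  fixes A :: "'a set"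
  assumes A: "finite A" and x: "x \<in> A" and k: "even k" "0 < k" "k \<le> card A"
  and IH: "\<And>B::'a set. finite B \<Longrightarrow> card B = card A - k \<Longrightarrow> card (ECP B) = E"
  shows "card (Sxk A x k) = \<Prod>{card A - k + 1..card A - 1} * E"
proof -
  define LS where "LS = {xs. length xs = k - 1 \<and> distinct xs \<and> set xs \<subseteq> A - {x}}"
  define Sig where "Sig = (SIGMA xs:LS. ECP (A - set (x#xs)))"
  define \<phi> where "\<phi> = (\<lambda>p. (map (\<lambda>i. (p^^i) x) [1..<k], perm_restrict p (A - orbit p x)))"
  define \<psi> :: "'a list \<times> ('a \<Rightarrow> 'a) \<Rightarrow> 'a \<Rightarrow> 'a" where "\<psi> = (\<lambda>(xs, q). cycle_of_list (x#xs) \<circ> q)"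
  have finLS: "finite LS"
    by (rule finite_subset[OF _ finite_lists_length_eq[OF A, of "k-1"]]) (auto simp: LS_def)
  have cA: "card (A - {x}) = card A - 1" using A x by simp
  have cardLS: "card LS = \<Prod>{card A - k + 1..card A - 1}"
    using card_lists_distinct_length_eq[of "A-{x}" "k-1"] A k cA unfolding LS_def by simp
  have cardSig: "card Sig = card LS * E"
  proof -
    have "card Sig = (\<Sum>xs\<in>LS. card (ECP (A - set (x#xs))))"
      unfolding Sig_def using finLS A by (simp add: finite_ECP)
    also have "\<dots> = (\<Sum>xs\<in>LS. E)"
    proof (rule sum.cong)
      fix xs assume xs: "xs \<in> LS"
      then have sub: "set (x#xs) \<subseteq> A" and d: "distinct (x#xs)" and len: "length xs = k - 1"
        using x by (auto simp: LS_def)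
      have "card (set (x#xs)) = k" using distinct_card[OF d] len k by simp
      then have "card (A - set (x#xs)) = card A - k" using card_Diff_subset[OF _ sub] by simp
      then show "card (ECP (A - set (x#xs))) = E" using IH[of "A - set (x#xs)"] A by simp
    qed simp
    finally show ?thesis by simp
  qed
  have fwd: "\<phi> p \<in> Sig \<and> \<psi> (\<phi> p) = p" if p: "p \<in> Sxk A x k" for p
  proof -
    have pp: "p permutes A" and ev: "\<forall>y\<in>A. even (card (orbit p y))" and ck: "card (orbit p x) = k"
      using p by (auto simp: Sxk_def ECP_def)
    define C where "C = orbit p x"
    have xo: "x \<in> C" unfolding C_def using self_orb[OF pp A] .
    have Cfun: "C = (\<lambda>n. (p^^n) x) ` {0..<funpow_dist1 p x x}"
      unfolding C_def using orbit_conv_funpow_dist1 xo C_def by metis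
    have inj: "inj_on (\<lambda>n. (p^^n) x) {0..<funpow_dist1 p x x}"
      using inj_on_funpow_dist1 xo C_def by metis
    have d: "funpow_dist1 p x x = k" using ck Cfun card_image[OF inj] C_def by simp
    have pk: "(p^^k) x = x" using funpow_dist1_prop[of x p x] xo d C_def by simp
    define l where "l = map (\<lambda>i. (p^^i) x) [0..<k]"
    define xs where "xs = map (\<lambda>i. (p^^i) x) [1..<k]"
    define q where "q = perm_restrict p (A - C)"
    have lcons: "l = x # xs" unfolding l_def xs_def using k(2) by (simp add: upt_conv_Cons)
    have dl: "distinct l" unfolding l_def using inj d by (simp add: distinct_map)
    have sl: "set l = C" unfolding l_def using Cfun d by simp
    have lenl: "length l = k" unfolding l_def by simp
    have CA: "C \<subseteq> A" unfolding C_def using permutes_orbit_subset[OF pp x] .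
    have qp: "q permutes A - C" unfolding q_def C_def
      using perm_restrict_diff_cyclic[OF pp cyclic_on_orbit[OF pp A]] .
    have xsLS: "xs \<in> LS" unfolding LS_def using dl lcons sl CA lenl by auto
    have qE: "q \<in> ECP (A - set (x#xs))"
      unfolding ECP_def
    proof (intro CollectI conjI ballI)
      show "q permutes A - set (x#xs)" using qp lcons sl by simp
      fix y assume y: "y \<in> A - set (x#xs)"
      then have y': "y \<in> A - C" using lcons sl by auto
      have "orbit q y = orbit p y"
        apply (rule orbit_cong0[OF y'])
        using permutes_in_image[OF qp] apply blast
        by (simp add: q_def perm_restrict_simps)
      then show "even (card (orbit q y))" using ev y' by simp
    qed
    have "\<phi> p = (xs, q)" unfolding \<phi>_def xs_def q_def C_def by simp
    then have ph: "\<phi> p \<in> Sig" unfolding Sig_def using xsLS qE by simp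
    have "cycle_of_list l \<circ> q = p"
    proof
      fix y
      show "(cycle_of_list l \<circ> q) y = p y"
      proof (cases "y \<in> C")
        case True
        then obtain i where i: "i < k" "y = l ! i" using sl lenl by (metis in_set_conv_nth)
        have qy: "q y = y" unfolding q_def using True by (simp add: perm_restrict_simps)
        have "cycle_of_list l (l ! i) = map (cycle_of_list l ^^ 1) l ! i"
          using i lenl by simp
        also have "\<dots> = rotate 1 l ! i" using cyclic_rotation[OF dl, of 1] by simp
        also have "\<dots> = l ! ((1 + i) mod k)" using nth_rotate[of i l 1] i lenl by simp
        also have "\<dots> = (p^^((1+i) mod k)) x" unfolding l_def using k(2) by simp
        also have "\<dots> = (p^^(Suc i)) x" using funpow_mod_eq[where f=p and n=k and x=x and m="Suc i", OF pk] by simp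
        also have "\<dots> = p y" using i unfolding l_def by simp
        finally show ?thesis using qy i by simp
      next
        case False
        show ?thesis
        proof (cases "y \<in> A")
          case True
          with False have y: "y \<in> A - C" by simp
          then have "q y \<in> A - C" using permutes_in_image[OF qp] by simp
          then have "cycle_of_list l (q y) = q y" using sl by (simp add: id_outside_supp)
          then show ?thesis using y by (simp add: q_def perm_restrict_simps)
        next
          case nA: False
          have "q y = y" using nA by (simp add: q_def perm_restrict_simps)
          moreover have "y \<notin> set l" using sl CA nA by auto
          ultimately show ?thesis using permutes_not_in[OF pp nA] by (simp add: id_outside_supp)
        qed
      qed
    qed
    then have "\<psi> (\<phi> p) = p" using \<open>\<phi> p = (xs, q)\<close> lcons by (simp add: \<psi>_def)
    with ph show ?thesis by simp
  qed
  have bwd: "\<psi> s \<in> Sxk A x k \<and> \<phi> (\<psi> s) = s" if s: "s \<in> Sig" for s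
  proof -
    obtain xs q where sxq: "s = (xs, q)" by (cases s)
    have xsLS: "xs \<in> LS" and qE: "q \<in> ECP (A - set (x#xs))" using s sxq by (auto simp: Sig_def)
    define l where "l = x # xs"
    define c where "c = cycle_of_list l"
    define p where "p = c \<circ> q"
    have dl: "distinct l" and slA: "set l \<subseteq> A" and lenl: "length l = k"
      using xsLS x k(2) by (auto simp: LS_def l_def)
    have cp: "c permutes set l" unfolding c_def by (rule cycle_permutes)
    have qp: "q permutes A - set l" and qev: "\<forall>y\<in>A - set l. even (card (orbit q y))"
      using qE by (auto simp: ECP_def l_def)
    have pp: "p permutes A" unfolding p_def
      by (rule permutes_compose[OF permutes_subset[OF qp] permutes_subset[OF cp slA]]) auto
    have ag1: "p z = c z" if "z \<in> set l" for z
      using permutes_not_in[OF qp] that by (simp add: p_def)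
    have ag2: "p z = q z" if "z \<in> A - set l" for z
    proof -
      have "q z \<in> A - set l" using that permutes_in_image[OF qp] by simp
      then show ?thesis unfolding p_def c_def by (simp add: id_outside_supp)
    qed
    have ox: "orbit p x = set l"
    proof -
      have "orbit c x = orbit p x"
        apply (rule orbit_cong0[of x "set l"])
        using permutes_in_image[OF cp] ag1 by (auto simp: l_def)
      then show ?thesis unfolding c_def l_def using cycle_orbit dl l_def by metis
    qed
    have pow: "(p^^n) x = l ! (n mod k)" for n
    proof (induction n)
      case 0 show ?case using k(2) by (simp add: l_def)
    next
      case (Suc n)
      have "(p^^Suc n) x = p (l ! (n mod k))" using Suc by simp
      also have "\<dots> = c (l ! (n mod k))" using ag1 lenl k(2) by simp
      also have "\<dots> = c ((c^^n) x)" using cycle_pow[of x xs n] dl lenl unfolding c_def l_def by simp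
      also have "\<dots> = (c^^Suc n) x" by simp
      also have "\<dots> = l ! (Suc n mod k)" using cycle_pow[of x xs "Suc n"] dl lenl unfolding c_def l_def by simp
      finally show ?case .
    qed
    have "p \<in> Sxk A x k" unfolding Sxk_def ECP_def
    proof (intro CollectI conjI ballI)
      show "p permutes A" by fact
      show "card (orbit p x) = k" using ox distinct_card[OF dl] lenl by simp
      fix y assume y: "y \<in> A"
      show "even (card (orbit p y))"
      proof (cases "y \<in> set l")
        case True
        then have "orbit p y = orbit p x" using orb_eq[OF pp A, of y x] ox by simp
        then show ?thesis using ox distinct_card[OF dl] lenl k(1) by simp
      next
        case False
        then have y': "y \<in> A - set l" using y by simp
        have "orbit q y = orbit p y"
          apply (rule orbit_cong0[OF y'])
          using permutes_in_image[OF qp] apply blast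
          using ag2 by simp
        then show ?thesis using qev y' by metis
      qed
    qed
    moreover have "\<phi> p = s"
    proof -
      have "map (\<lambda>i. (p^^i) x) [1..<k] = xs"
      proof (rule nth_equalityI)
        show "length (map (\<lambda>i. (p^^i) x) [1..<k]) = length xs" using lenl by (simp add: l_def)
        fix j assume "j < length (map (\<lambda>i. (p^^i) x) [1..<k])"
        then have j: "j + 1 < k" by simp
        then show "map (\<lambda>i. (p^^i) x) [1..<k] ! j = xs ! j" 
        proof -
          have u: "[1..<k] ! j = Suc j" using j nth_upt[of 1 j k] by simp
          have "map (\<lambda>i. (p^^i) x) [1..<k] ! j = (p^^([1..<k] ! j)) x" using j by (intro nth_map) simp
          also have "\<dots> = (p^^(Suc j)) x" by (simp only: u)
          also have "\<dots> = xs ! j" using pow[of "Suc j"] j by (simp add: l_def del: funpow.simps)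
          finally show ?thesis .
        qed
      qed
      moreover have "perm_restrict p (A - orbit p x) = q"
      proof
        fix y show "perm_restrict p (A - orbit p x) y = q y"
          using ag2 permutes_not_in[OF qp] ox by (cases "y \<in> A - set l") (auto simp: perm_restrict_simps)
      qed
      ultimately show ?thesis unfolding \<phi>_def sxq by simp
    qed
    moreover have "\<psi> s = p" unfolding \<psi>_def sxq p_def c_def l_def by simp
    ultimately show ?thesis by simp
  qed
  have "bij_betw \<phi> (Sxk A x k) Sig"
    by (rule bij_betw_byWitness[where f'=\<psi>]) (use fwd bwd in auto)
  then have "card (Sxk A x k) = card Sig" by (rule bij_betw_same_card)
  then show ?thesis using cardSig cardLS by simp
qed

lemma card_ECP: "finite A \<Longrightarrow> card (ECP A) = e (card A)"
proof (induction "card A" arbitrary: A rule: less_induct)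
  case less
  show ?case
  proof (cases "A = {}")
    case True
    have "ECP A = {id}" using True by (auto simp: ECP_def permutes_empty)
    then show ?thesis using True by (simp add: e_def D_def)
  next
    case False
    then obtain x where x: "x \<in> A" by blast
    define n where "n = card A"
    have n1: "n \<ge> 1" using less.prems x n_def by (metis One_nat_def Suc_leI card_gt_0_iff empty_iff)
    have decomp: "ECP A = (\<Union>k\<in>{1..n}. Sxk A x k)"
    proof
      show "ECP A \<subseteq> (\<Union>k\<in>{1..n}. Sxk A x k)"
      proof
        fix p assume p: "p \<in> ECP A"
        then have pp: "p permutes A" by (simp add: ECP_def)
        have sub: "orbit p x \<subseteq> A" using permutes_orbit_subset[OF pp x] .
        have xo: "x \<in> orbit p x" using self_orb[OF pp less.prems] .
        have fo: "finite (orbit p x)" using sub less.prems finite_subset by blast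
        have "card (orbit p x) \<ge> 1" using xo fo by (metis One_nat_def Suc_leI card_gt_0_iff empty_iff)
        moreover have "card (orbit p x) \<le> n" unfolding n_def using card_mono[OF less.prems sub] .
        ultimately show "p \<in> (\<Union>k\<in>{1..n}. Sxk A x k)" using p by (auto simp: Sxk_def)
      qed
    qed (auto simp: Sxk_def)
    have "card (ECP A) = (\<Sum>k\<in>{1..n}. card (Sxk A x k))"
      unfolding decomp
      by (rule card_UN_disjoint) (auto simp: Sxk_def finite_ECP less.prems)
    also have "\<dots> = (\<Sum>k\<in>{1..n}. if even k then \<Prod>{n-k+1..n-1} * e (n-k) else 0)"
    proof (rule sum.cong)
      fix k assume k: "k \<in> {1..n}"
      show "card (Sxk A x k) = (if even k then \<Prod>{n-k+1..n-1} * e (n-k) else 0)"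
      proof (cases "even k")
        case True
        have "card (Sxk A x k) = \<Prod>{card A - k + 1..card A - 1} * e (n-k)"
        proof (rule card_Sxk[OF less.prems x True])
          show "0 < k" "k \<le> card A" using k n_def by auto
          fix B :: "'a set" assume "finite B" "card B = card A - k"
          moreover have "card A - k < card A" using k n_def by auto
          ultimately show "card (ECP B) = e (n - k)" using less.hyps n_def by metis
        qed
        then show ?thesis using True n_def by simp
      next
        case False
        have "Sxk A x k = {}" using False x by (auto simp: Sxk_def ECP_def)
        then show ?thesis using False by simp
      qed
    qed simp
    also have "\<dots> = e n" using e_rec[OF n1] .
    finally show ?thesis using n_def by simp
  qed
qed

lemma Y_alt:
  assumes pp: "p permutes {1..n}"
  shows "Y n k p = card {x\<in>{1..n}. card (orbit p x) = k}"
proof -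
  define A :: "nat set" where "A = {1..n}"
  define Os where "Os = {orbit p x | x. x \<in> A \<and> card (orbit p x) = k}"
  have pA: "p permutes A" using pp A_def by simp
  have fA: "finite A" by (simp add: A_def)
  have U: "\<Union>Os = {x\<in>A. card (orbit p x) = k}"
  proof
    show "\<Union>Os \<subseteq> {x\<in>A. card (orbit p x) = k}"
    proof
      fix y assume "y \<in> \<Union>Os"
      then obtain x where x: "x \<in> A" "card (orbit p x) = k" "y \<in> orbit p x" by (auto simp: Os_def)
      then have "orbit p y = orbit p x" using orb_eq[OF pA fA] by blast
      moreover have "y \<in> A" using x permutes_orbit_subset[OF pA] by blast
      ultimately show "y \<in> {x\<in>A. card (orbit p x) = k}" using x by simp
    qed
    show "{x\<in>A. card (orbit p x) = k} \<subseteq> \<Union>Os"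
      using self_orb[OF pA fA] by (auto simp: Os_def)
  qed
  have fin: "\<And>c. c \<in> Os \<Longrightarrow> finite c"
    using permutes_orbit_subset[OF pA] fA by (auto simp: Os_def intro: finite_subset)
  have pw: "pairwise disjnt Os"
  proof (rule pairwiseI)
    fix c1 c2 assume c: "c1 \<in> Os" "c2 \<in> Os" "c1 \<noteq> c2"
    then obtain x1 x2 where "c1 = orbit p x1" "c2 = orbit p x2" by (auto simp: Os_def)
    then show "disjnt c1 c2" using c orb_eq[OF pA fA] unfolding disjnt_def by blast
  qed
  have finO: "finite Os"
  proof -
    have "Os \<subseteq> (\<lambda>x. orbit p x) ` A" by (auto simp: Os_def)
    then show ?thesis using fA finite_surj by blast
  qed
  have "card (\<Union>Os) = sum card Os" by (rule card_Union_disjoint[OF pw fin])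
  also have "\<dots> = sum (\<lambda>_. k) Os" by (rule sum.cong) (auto simp: Os_def)
  also have "\<dots> = k * card Os" by simp
  finally have "card {x\<in>A. card (orbit p x) = k} = k * card Os" using U by simp
  then show ?thesis unfolding Y_def num_cycles_def Os_def A_def by simp
qed

lemma card_filter_sum: "finite S \<Longrightarrow> real (card {x\<in>S. P x}) = (\<Sum>x\<in>S. if P x then 1 else 0)"
  by (simp add: sum.If_cases Int_def conj_commute)

lemma E_formula:
  assumes k: "1 \<le> k" "k \<le> n" "even k"
  shows "E_even n (\<lambda>p. real (Y n k p)) = real n * real (\<Prod>{n-k+1..n-1}) * real (e (n-k)) / real (e n)"
proof -
  define A :: "nat set" where "A = {1..n}"
  have fA: "finite A" and cA: "card A = n" by (auto simp: A_def)
  have ecp: "even_cycle_perms n = ECP A" by (simp add: even_cycle_perms_def ECP_def A_def)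
  have fE: "finite (ECP A)" using finite_ECP[OF fA] .
  have "(\<Sum>p\<in>ECP A. real (Y n k p)) = (\<Sum>p\<in>ECP A. \<Sum>x\<in>A. if card (orbit p x) = k then 1 else 0)"
  proof (rule sum.cong)
    fix p assume "p \<in> ECP A"
    then have "p permutes {1..n}" by (simp add: ECP_def A_def)
    then have "Y n k p = card {x\<in>A. card (orbit p x) = k}" unfolding A_def by (rule Y_alt)
    then show "real (Y n k p) = (\<Sum>x\<in>A. if card (orbit p x) = k then 1 else 0)"
      using card_filter_sum[OF fA, of "\<lambda>x. card (orbit p x) = k"] by simp
  qed simp
  also have "\<dots> = (\<Sum>x\<in>A. \<Sum>p\<in>ECP A. if card (orbit p x) = k then 1 else 0)"
    by (rule sum.swap)
  also have "\<dots> = (\<Sum>x\<in>A. real (\<Prod>{n-k+1..n-1} * e (n-k)))"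
  proof (rule sum.cong)
    fix x assume x: "x \<in> A"
    have "(\<Sum>p\<in>ECP A. if card (orbit p x) = k then 1 else 0) = real (card (Sxk A x k))"
      unfolding Sxk_def using card_filter_sum[OF fE, of "\<lambda>p. card (orbit p x) = k"] by simp
    also have "card (Sxk A x k) = \<Prod>{card A - k + 1..card A - 1} * e (n-k)"
    proof (rule card_Sxk[OF fA x k(3)])
      show "0 < k" "k \<le> card A" using k cA by auto
      fix B :: "nat set" assume "finite B" "card B = card A - k"
      then show "card (ECP B) = e (n - k)" using card_ECP cA by metis
    qed
    finally show "(\<Sum>p\<in>ECP A. if card (orbit p x) = k then 1 else 0) = real (\<Prod>{n-k+1..n-1} * e (n-k))"
      using cA by simp
  qed simp
  also have "\<dots> = real n * real (\<Prod>{n-k+1..n-1}) * real (e (n-k))" using cA by simp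
  finally show ?thesis unfolding E_even_def ecp using card_ECP[OF fA] cA by simp
qed

definition Vf :: "nat \<Rightarrow> nat \<Rightarrow> real" where
  "Vf L t = real (\<Prod>{2*L+1..2*(L+t)}) * real (D L)^2 / real (D (L+t))^2"

lemma D_pos: "D m > 0" by (simp add: D_def)

lemma V_step: "Vf L (Suc t) = Vf L t * ((2*(L+t)+2) / (2*(L+t)+1))"
proof -
  have p: "\<Prod>{2*L+1..2*(L+Suc t)} = \<Prod>{2*L+1..2*(L+t)} * (2*(L+t)+1) * (2*(L+t)+2)"
  proof -
    have "\<Prod>{2*L+1..2*(L+Suc t)} = \<Prod>{2*L+1..Suc (Suc (2*(L+t)))}" by simp
    also have "\<dots> = \<Prod>{2*L+1..Suc (2*(L+t))} * Suc (Suc (2*(L+t)))" by (subst prod.cl_ivl_Suc) auto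
    also have "\<Prod>{2*L+1..Suc (2*(L+t))} = \<Prod>{2*L+1..2*(L+t)} * Suc (2*(L+t))" by (subst prod.cl_ivl_Suc) auto
    finally show ?thesis by simp
  qed
  have d: "D (L + Suc t) = (2*(L+t)+1) * D (L+t)" using D_Suc[of "L+t"] by simp
  have gen: "\<And>P c b X d::real. d > 0 \<Longrightarrow> c > 0 \<Longrightarrow> P*c*b*X/(c*d)^2 = P*X/d^2*(b/c)"
    by (simp add: field_simps power2_eq_square)
  have "Vf L (Suc t) = real (\<Prod>{2*L+1..2*(L+t)}) * real (2*(L+t)+1) * real (2*(L+t)+2) * real (D L)^2
        / (real (2*(L+t)+1) * real (D (L+t)))^2"
    unfolding Vf_def p d by (simp only: of_nat_mult)
  also have "\<dots> = Vf L t * (real (2*(L+t)+2) / real (2*(L+t)+1))"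
    unfolding Vf_def by (rule gen) (use D_pos in auto)
  finally show ?thesis by (simp add: add_ac)
qed

lemma V_bounds:
  assumes L: "L \<ge> 1"
  shows "(2*(real L+t)+1)/(2*L+1) \<le> (Vf L t)^2 \<and> (Vf L t)^2 \<le> (real L+t)/L"
proof (induction t)
  case 0
  have "Vf L 0 = 1" unfolding Vf_def using D_pos[of L] by simp
  then show ?case using L by simp
next
  case (Suc t)
  define a where "a = real L + real t"
  define v where "v = Vf L t"
  have a: "a \<ge> 1" using L a_def by simp
  have r: "Vf L (Suc t) = v * ((2*a+2)/(2*a+1))" unfolding v_def a_def V_step by simp
  have lo: "(2*a+1)/(2*L+1) \<le> v^2" and up: "v^2 \<le> a/L" using Suc a_def v_def by (auto simp: add_ac)
  have sq: "(Vf L (Suc t))^2 = v^2 * ((2*a+2)^2/(2*a+1)^2)" unfolding r by (simp add: power_mult_distrib power_divide)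
  have pos: "(2*a+2)^2/(2*a+1)^2 \<ge> 0" by simp
  have up2: "v^2 * ((2*a+2)^2/(2*a+1)^2) \<le> (a/L) * ((2*a+2)^2/(2*a+1)^2)"
    using mult_right_mono[OF up pos] .
  have "(a/L) * ((2*a+2)^2/(2*a+1)^2) \<le> (a+1)/L"
  proof -
    have "a * (2*a+2)^2 \<le> (a+1) * (2*a+1)^2" using a by (simp add: power2_eq_square algebra_simps)
    then show ?thesis using a L by (simp add: field_simps)
  qed
  have lo2: "((2*a+1)/(2*L+1)) * ((2*a+2)^2/(2*a+1)^2) \<le> v^2 * ((2*a+2)^2/(2*a+1)^2)"
    using mult_right_mono[OF lo pos] .
  have "(2*(a+1)+1)/(2*L+1) \<le> ((2*a+1)/(2*L+1)) * ((2*a+2)^2/(2*a+1)^2)"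
  proof -
    have "(2*(a+1)+1) * (2*a+1) \<le> (2*a+2)^2" by (simp add: power2_eq_square algebra_simps)
    then have e2: "2*(a+1)+1 \<le> (2*a+2)^2/(2*a+1)" using a by (subst pos_le_divide_eq) auto
    have e1: "((2*a+1)/(2*L+1)) * ((2*a+2)^2/(2*a+1)^2) = ((2*a+2)^2/(2*a+1)) / (2*L+1)"
    proof -
      have gen: "\<And>x y z::real. x \<noteq> 0 \<Longrightarrow> (x/y) * (z/x^2) = (z/x)/y"
        by (simp add: power2_eq_square)
      show ?thesis by (rule gen) (use a in simp)
    qed
    show ?thesis unfolding e1 by (rule divide_right_mono[OF e2]) simp
  qed
  show ?case using up2 lo2 sq \<open>(a/L) * _ \<le> _\<close> \<open>_ \<le> ((2*a+1)/(2*L+1)) * _\<close>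
    unfolding a_def by (simp add: add_ac)
qed

lemma final_ineq:
  fixes v s \<epsilon> L j :: real
  assumes v0: "v \<ge> 0" and s0: "s > 0" and s2: "s^2 = (L+j)/L"
    and lo: "(2*(L+j)+1)/(2*L+1) \<le> v^2" and up: "v^2 \<le> (L+j)/L"
    and L: "L \<ge> 1" and j: "j \<ge> 0" and e: "\<epsilon> > 0" and ej: "\<epsilon>*j < L"
  shows "\<bar>v - s\<bar> \<le> (1/\<epsilon>) * s / (2*(L+j))"
proof -
  have vv: "v^2 \<le> s^2" using up s2 by simp
  have vs: "v \<le> s" using power2_le_imp_le[OF vv] s0 by simp
  have a1: "(s - v) * s \<le> s^2 - v^2"
  proof -
    have "v * (s - v) \<ge> 0" using v0 vs by simp
    then show ?thesis by (simp add: power2_eq_square algebra_simps)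
  qed
  have id: "(L+j)/L - (2*(L+j)+1)/(2*L+1) = j/(L*(2*L+1))"
    using L by (simp add: field_simps)
  have a2: "s^2 - v^2 \<le> j/(L*(2*L+1))" using lo s2 id by linarith
  have a3: "j/(L*(2*L+1)) \<le> 1/(2*\<epsilon>*L)"
  proof -
    have "j * (2*\<epsilon>*L) \<le> 1 * (L*(2*L+1))"
    proof -
      have "\<epsilon>*j*(2*L) \<le> L*(2*L)" using ej L by (intro mult_right_mono) auto
      also have "\<dots> \<le> L*(2*L+1)" using L by simp
      finally show ?thesis by (simp add: algebra_simps)
    qed
    then have num: "j * (2*\<epsilon>*L) \<le> L*(2*L+1)" by simp
    have h: "2*L+1 \<noteq> 0" using L by linarith
    have b: "L*(2*L+1) > 0" and d: "2*\<epsilon>*L > 0" using L e by auto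
    have "j/(L*(2*L+1)) = (j*(2*\<epsilon>*L)) / (L*(2*L+1)*(2*\<epsilon>*L))"
      by (rule nonzero_mult_divide_mult_cancel_right[symmetric]) (use d in linarith)
    also have "\<dots> \<le> (L*(2*L+1)) / (L*(2*L+1)*(2*\<epsilon>*L))"
      by (rule divide_right_mono[OF num]) (use b d in simp)
    also have "\<dots> = 1/(2*\<epsilon>*L)" using b h by simp
    finally show ?thesis .
  qed
  have a4: "1/(2*\<epsilon>*L) = s^2 / (\<epsilon> * (2*(L+j)))"
  proof -
    have nz: "L + j \<noteq> 0" using L j by linarith
    have "s^2 / (\<epsilon> * (2*(L+j))) = ((L+j)*1) / ((L+j)*(2*\<epsilon>*L))"
      unfolding s2 by (simp add: algebra_simps)
    also have "\<dots> = 1/(2*\<epsilon>*L)" by (rule nonzero_mult_divide_mult_cancel_left[OF nz])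
    finally show ?thesis by simp
  qed
  have "(s - v) * s \<le> s^2 / (\<epsilon> * (2*(L+j)))" using a1 a2 a3 a4 by linarith
  then have "(s - v) * s \<le> (s / (\<epsilon> * (2*(L+j)))) * s" by (simp add: power2_eq_square)
  then have "s - v \<le> s / (\<epsilon> * (2*(L+j)))" using s0 by (rule mult_right_le_imp_le)
  then show ?thesis using vs by (simp add: abs_if)
qed

theorem proposition3p4:
  fixes \<epsilon> :: real
  assumes "0 < \<epsilon>" and "\<epsilon> < 1"
  shows "\<exists>C N. \<forall>n k. N \<le> n \<and> even n \<and> even k \<and> 0 < real k / real n
            \<and> real k / real n < 1 - \<epsilon> \<longrightarrow>
           \<bar>E_even n (\<lambda>p. real (Y n k p)) - (1 - real k / real n) powr (-1/2)\<bar>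
             \<le> C * (1 - real k / real n) powr (-1/2) / real n"
proof (intro exI allI impI)
  fix n k :: nat
  assume H: "0 \<le> n \<and> even n \<and> even k \<and> 0 < real k / real n \<and> real k / real n < 1 - \<epsilon>"
  have n0: "n > 0" using H by (cases "n = 0") auto
  have k0: "k > 0" using H by (cases "k = 0") auto
  have kn: "k < n"
  proof -
    have "real k / real n < 1" using H assms by linarith
    then show ?thesis using n0 by (simp add: divide_less_eq)
  qed
  obtain m where m: "n = 2*m" using H by blast
  obtain j where j: "k = 2*j" using H by blast
  define L where "L = m - j"
  have L1: "L \<ge> 1" and mLj: "m = L + j" using kn m j L_def by auto
  have j1: "j \<ge> 1" using k0 j by simp
  have prodn: "n * \<Prod>{n-k+1..n-1} = \<Prod>{2*L+1..2*(L+j)}"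
  proof -
    have "\<Prod>{n-k+1..n} = \<Prod>{n-k+1..Suc (n-1)}" using n0 by simp
    also have "\<dots> = \<Prod>{n-k+1..n-1} * Suc (n-1)" using k0 kn by (subst prod.cl_ivl_Suc) auto
    finally have "\<Prod>{n-k+1..n} = \<Prod>{n-k+1..n-1} * n" using n0 by simp
    moreover have "n - k + 1 = 2*L+1" "n = 2*(L+j)" using m j mLj by auto
    ultimately show ?thesis by (simp add: mult.commute)
  qed
  have en: "e n = (D (L+j))^2" and enk: "e (n-k) = (D L)^2"
    using m j mLj by (auto simp: e_def)
  have Ev: "E_even n (\<lambda>p. real (Y n k p)) = Vf L j"
  proof -
    have "E_even n (\<lambda>p. real (Y n k p)) = real n * real (\<Prod>{n-k+1..n-1}) * real (e (n-k)) / real (e n)"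
      using E_formula[of k n] k0 kn H by simp
    also have "\<dots> = real (n * \<Prod>{n-k+1..n-1}) * real (e (n-k)) / real (e n)" by simp
    also have "\<dots> = Vf L j" unfolding prodn en enk Vf_def by simp
    finally show ?thesis .
  qed
  have rn: "real n = 2*(real L + real j)" and rk: "real k = 2 * real j" using m j mLj by auto
  have Lj0: "real L + real j > 0" using L1 by simp
  have kn_eq: "real k / real n = real j / (real L + real j)"
    unfolding rn rk by (rule mult_divide_mult_cancel_left) simp
  define t where "t = 1 - real k / real n"
  have t_eq: "t = real L / (real L + real j)"
  proof -
    have nz: "real L + real j \<noteq> 0" using Lj0 by linarith
    show ?thesis unfolding t_def kn_eq using nz by (simp add: field_simps)
  qed
  have t0: "t > 0" unfolding t_eq using L1 by simp
  define s where "s = t powr (-1/2)"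
  have s0: "s > 0" unfolding s_def using t0 by simp
  have s2: "s^2 = (real L + real j) / real L"
  proof -
    have "s^2 = s powr 2" using s0 by (simp add: powr_realpow)
    also have "\<dots> = t powr (-1)" unfolding s_def using t0 by (simp add: powr_powr)
    also have "\<dots> = 1 / t" using t0 by (simp add: powr_neg_one)
    finally show ?thesis unfolding t_eq by simp
  qed
  have vb: "(2*(real L + real j)+1)/(2*real L+1) \<le> (Vf L j)^2 \<and> (Vf L j)^2 \<le> (real L + real j)/real L"
    using V_bounds[OF L1, of j] by simp
  have v0: "Vf L j \<ge> 0" unfolding Vf_def by (intro divide_nonneg_nonneg mult_nonneg_nonneg) (auto simp: prod_nonneg)
  have ej: "\<epsilon> * real j < real L"
  proof -
    have "real k / real n = real j / (real L + real j)" by (rule kn_eq)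
    then have "real j / (real L + real j) < 1 - \<epsilon>" using H by simp
    then have "real j < (1 - \<epsilon>) * (real L + real j)" using L1 by (simp add: divide_less_eq)
    then have "\<epsilon> * real L + \<epsilon> * real j < real L" by (simp add: algebra_simps)
    moreover have "\<epsilon> * real L \<ge> 0" using assms by simp
    ultimately show ?thesis by linarith
  qed
  have "\<bar>Vf L j - s\<bar> \<le> (1/\<epsilon>) * s / (2*(real L + real j))"
    by (rule final_ineq[OF v0 s0 s2 conjunct1[OF vb] conjunct2[OF vb] _ _ assms(1) ej]) (use L1 in simp_all)
  moreover note rn
  ultimately show "\<bar>E_even n (\<lambda>p. real (Y n k p)) - (1 - real k / real n) powr (-1/2)\<bar>
             \<le> (1/\<epsilon>) * (1 - real k / real n) powr (-1/2) / real n"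
    unfolding Ev using s_def t_def by simp
qed

end
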